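(* Let $a,b>0$ with $a+b\leq 1$, and let $c\in\mathbb{R}$. Define $$f_{a,b,c}(x)=\frac{{}_2F_1(a,b;a+b;x)}{c-\log(1-x)}.$$ Define on $[0,1)$ the functions $$h(x)=\frac{(ab)^2}{(a+b)(a+b+1)}(1-x)\,{}_2F_1(a+1,b+1;a+b+2;x)+\frac{ab}{a+b}\,{}_2F_1(a,b;a+b+1;x),$$ $$g(x)=-\Big(\frac{2ab}{a+b}\,{}_2F_1(a,b;a+b+1;x)+{}_2F_1(a,b;a+b;x)\Big),\qquad \Delta(x)=g(x)^2-8h(x)\,{}_2F_1(a,b;a+b;x),$$ $$\omega_\pm(x)=\frac{-g(x)\pm\sqrt{\Delta(x)}}{2h(x)},\qquad \varphi_\pm(x)=\log(1-x)+\omega_\pm(x),$$ and set $\alpha_0=\max_{x\in[0,1)}\varphi_+(x)$, $\delta_-=\max_{x\in[0,1)}\varphi_-(x)$, $\delta_+=\min_{x\in[0,1)}\varphi_+(x)$. Then $f_{a,b,c}$ is convex on $[0,1)$ if and only if $c\geq\alpha_0$, and $f_{a,b,c}$ is concave on $[0,1)$ if and only if $c\in[\delta_-,\delta_+]$.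
   Context: ${}_2F_1(a,b;c;x)=\sum_{n\geq0}\frac{(a)_n(b)_n}{(c)_n}\frac{x^n}{n!}$ is the Gauss hypergeometric function, with $(a)_n=\Gamma(a+n)/\Gamma(a)$. *)

theory Defs
  imports "HOL-Analysis.Analysis"
begin

text \<open>Gauss hypergeometric function 2F1(a,b;c;x) as the sum of its power series
  (used here only for 0 <= x < 1, where the series converges absolutely).\<close>
definition hyp2F1 :: "real \<Rightarrow> real \<Rightarrow> real \<Rightarrow> real \<Rightarrow> real" where
  "hyp2F1 a b c x =
     (\<Sum>n. pochhammer a n * pochhammer b n / pochhammer c n * x ^ n / fact n)"

definition f_abc :: "real \<Rightarrow> real \<Rightarrow> real \<Rightarrow> real \<Rightarrow> real" where
  "f_abc a b c x = hyp2F1 a b (a + b) x / (c - ln (1 - x))"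

definition h_fun :: "real \<Rightarrow> real \<Rightarrow> real \<Rightarrow> real" where
  "h_fun a b x = (a * b)^2 / ((a + b) * (a + b + 1)) * (1 - x) * hyp2F1 (a + 1) (b + 1) (a + b + 2) x
                 + a * b / (a + b) * hyp2F1 a b (a + b + 1) x"

definition g_fun :: "real \<Rightarrow> real \<Rightarrow> real \<Rightarrow> real" where
  "g_fun a b x = - (2 * a * b / (a + b) * hyp2F1 a b (a + b + 1) x + hyp2F1 a b (a + b) x)"

definition Delta_fun :: "real \<Rightarrow> real \<Rightarrow> real \<Rightarrow> real" where
  "Delta_fun a b x = (g_fun a b x)^2 - 8 * h_fun a b x * hyp2F1 a b (a + b) x"

definition omega_plus :: "real \<Rightarrow> real \<Rightarrow> real \<Rightarrow> real" where
  "omega_plus a b x = (- g_fun a b x + sqrt (Delta_fun a b x)) / (2 * h_fun a b x)"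

definition omega_minus :: "real \<Rightarrow> real \<Rightarrow> real \<Rightarrow> real" where
  "omega_minus a b x = (- g_fun a b x - sqrt (Delta_fun a b x)) / (2 * h_fun a b x)"

definition phi_plus :: "real \<Rightarrow> real \<Rightarrow> real \<Rightarrow> real" where
  "phi_plus a b x = ln (1 - x) + omega_plus a b x"

definition phi_minus :: "real \<Rightarrow> real \<Rightarrow> real \<Rightarrow> real" where
  "phi_minus a b x = ln (1 - x) + omega_minus a b x"

end

theory Submission
  imports Defs
begin

definition hc :: "real \<Rightarrow> real \<Rightarrow> real \<Rightarrow> nat \<Rightarrow> real" where
  "hc a b c n = pochhammer a n * pochhammer b n / pochhammer c n / fact n"

lemma hyp2F1_alt: "hyp2F1 a b c x = (\<Sum>n. hc a b c n * x ^ n)"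
  unfolding hyp2F1_def hc_def by (simp add: field_simps)

lemma powser_bdd_summable:
  fixes c :: "nat \<Rightarrow> real"
  assumes "\<And>n. \<bar>c n\<bar> \<le> M" "\<bar>x\<bar> < 1"
  shows "summable (\<lambda>n. c n * x ^ n)"
proof (rule summable_comparison_test[where g = "\<lambda>n. M * \<bar>x\<bar> ^ n"])
  show "\<exists>N. \<forall>n\<ge>N. norm (c n * x ^ n) \<le> M * \<bar>x\<bar> ^ n"
    using assms by (auto simp: abs_mult power_abs intro!: mult_right_mono)
  show "summable (\<lambda>n. M * \<bar>x\<bar> ^ n)"
    using assms by (intro summable_mult summable_geometric) auto
qed

lemma powser_bdd_deriv:
  fixes c :: "nat \<Rightarrow> real"
  assumes "\<And>n. \<bar>c n\<bar> \<le> M" "\<bar>x\<bar> < 1"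
  shows "((\<lambda>x. \<Sum>n. c n * x ^ n) has_real_derivative (\<Sum>n. diffs c n * x ^ n)) (at x)"
  using termdiffs_strong'[of 1 c x] powser_bdd_summable[OF assms(1)] assms(2) by auto

lemma powser_bdd_diffs_summable:
  fixes c :: "nat \<Rightarrow> real"
  assumes "\<And>n. \<bar>c n\<bar> \<le> M" "\<bar>x\<bar> < 1"
  shows "summable (\<lambda>n. diffs c n * x ^ n)"
  using termdiff_converges[of x 1 c] powser_bdd_summable[OF assms(1)] assms(2) by auto

lemma powser_bdd_isCont:
  fixes c :: "nat \<Rightarrow> real"
  assumes "\<And>n. \<bar>c n\<bar> \<le> M" "\<bar>x\<bar> < 1"
  shows "isCont (\<lambda>x. \<Sum>n. c n * x ^ n) x"
  using powser_bdd_deriv[OF assms] by (rule DERIV_isCont)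

lemma sums_shift_mult:
  fixes d :: "nat \<Rightarrow> real"
  assumes "(\<lambda>n. d n * x ^ n) sums S"
  shows "(\<lambda>n. (d n - (if n = 0 then 0 else d (n - 1))) * x ^ n) sums ((1 - x) * S)"
proof -
  define e where "e n = (if n = 0 then 0 else d (n - 1) * x ^ n)" for n
  have "(\<lambda>n. x * (d n * x ^ n)) sums (x * S)"
    using assms by (rule sums_mult)
  then have "(\<lambda>n. e (Suc n)) sums (x * S)"
    by (simp add: e_def mult_ac)
  then have "e sums (x * S + e 0)" by (rule sums_Suc)
  then have e: "e sums (x * S)" by (simp add: e_def)
  have "(\<lambda>n. d n * x ^ n - e n) sums (S - x * S)"
    using assms e by (rule sums_diff)
  moreover have "(\<lambda>n. d n * x ^ n - e n) = (\<lambda>n. (d n - (if n = 0 then 0 else d (n - 1))) * x ^ n)"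
    by (auto simp: e_def algebra_simps)
  ultimately show ?thesis by (simp add: algebra_simps)
qed

lemma hc_0 [simp]: "hc a b c 0 = 1"
  by (simp add: hc_def)

lemma hc_Suc:
  assumes "c > 0"
  shows "hc a b c (Suc n) = hc a b c n * ((a + n) * (b + n) / ((c + n) * (n + 1)))"
proof -
  have "pochhammer c n > 0" using assms by (simp add: pochhammer_pos)
  moreover have "c + n > 0" using assms by simp
  ultimately show ?thesis
    unfolding hc_def by (simp add: pochhammer_Suc fact_Suc field_simps)
qed

lemma hc_pos:
  assumes "a > 0" "b > 0" "c > 0"
  shows "hc a b c n > 0"
  using assms unfolding hc_def by (simp add: pochhammer_pos)

lemma hc_diffs:
  assumes "c > 0"
  shows "diffs (hc a b c) n = a * b / c * hc (a + 1) (b + 1) (c + 1) n"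
proof -
  have p: "pochhammer (c + 1) n > 0" using assms by (simp add: pochhammer_pos)
  have ne: "pochhammer (c + 1) n \<noteq> 0" "fact n \<noteq> (0::real)" "c \<noteq> 0" "1 + real n \<noteq> 0"
    using p assms by auto
  show ?thesis
    unfolding hc_def diffs_def
    by (simp only: pochhammer_rec fact_Suc) (use ne in \<open>simp add: divide_simps\<close>)
qed

lemma hc_shift_c:
  assumes "c > 0"
  shows "hc a b (c + 1) n = hc a b c n * (c / (c + n))"
proof -
  have p: "pochhammer c n > 0" "pochhammer (c + 1) n > 0" using assms by (simp_all add: pochhammer_pos)
  have "pochhammer c (Suc n) = c * pochhammer (c + 1) n" by (rule pochhammer_rec)
  moreover have "pochhammer c (Suc n) = pochhammer c n * (c + n)" by (rule pochhammer_Suc)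
  ultimately have "pochhammer (c + 1) n = pochhammer c n * (c + n) / c" using assms by (simp add: field_simps)
  moreover have "fact n > (0::real)" by simp
  moreover have "c + n > 0" using assms by simp
  ultimately show ?thesis using p assms unfolding hc_def by (simp add: divide_simps) (simp add: algebra_simps)
qed


definition Fs :: "real \<Rightarrow> real \<Rightarrow> real \<Rightarrow> real" where
  "Fs a b x = hyp2F1 a b (a + b) x"
definition Gs :: "real \<Rightarrow> real \<Rightarrow> real \<Rightarrow> real" where
  "Gs a b x = a * b / (a + b) * hyp2F1 a b (a + b + 1) x"
definition Ws :: "real \<Rightarrow> real \<Rightarrow> real \<Rightarrow> real" where
  "Ws a b x = (a * b)^2 / ((a + b) * (a + b + 1)) * hyp2F1 (a + 1) (b + 1) (a + b + 2) x"

context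
  fixes a b :: real
  assumes a_pos: "a > 0" and b_pos: "b > 0" and ab_le: "a + b \<le> 1"
begin

lemma s_pos: "a + b > 0" using a_pos b_pos by simp
lemma p_pos: "a * b > 0" using a_pos b_pos by simp
lemma p_le_s: "a * b \<le> a + b"
proof -
  have "b \<le> 1" using ab_le a_pos by simp
  then have "a * b \<le> a" using a_pos by (simp add: mult_left_le)
  then show ?thesis using b_pos by simp
qed
lemma p_quarter: "4 * (a * b) \<le> (a + b)^2"
proof -
  have "(a+b)^2 - 4*(a*b) = (a-b)^2" by (simp add: power2_eq_square algebra_simps)
  then show ?thesis using zero_le_power2[of "a-b"] by linarith
qed
lemma p_le_quarter: "a * b \<le> 1/4"
proof -
  have "(a+b)^2 \<le> 1" using ab_le s_pos by (simp add: power_le_one)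
  then show ?thesis using p_quarter by simp
qed

abbreviation "u \<equiv> hc a b (a + b)"
abbreviation "cG \<equiv> hc a b (a + b + 1)"
abbreviation "v \<equiv> hc (a + 1) (b + 1) (a + b + 2)"

lemma u_pos: "u n > 0" using a_pos b_pos by (intro hc_pos) auto
lemma cG_pos: "cG n > 0" using a_pos b_pos by (intro hc_pos) auto
lemma v_pos: "v n > 0" using a_pos b_pos by (intro hc_pos) auto

lemma u_Suc: "u (Suc n) = u n * ((a + n) * (b + n) / ((a + b + n) * (n + 1)))"
  using s_pos by (rule hc_Suc)
lemma v_Suc: "v (Suc n) = v n * ((a + 1 + n) * (b + 1 + n) / ((a + b + 2 + n) * (n + 1)))"
  using s_pos by (intro hc_Suc) auto
lemma cG_eq: "cG n = u n * ((a + b) / (a + b + n))"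
  using s_pos by (rule hc_shift_c)

lemma u_dec: "u (Suc n) \<le> u n"
proof -
  have "(a + n) * (b + n) \<le> (a + b + n) * (n + 1)"
    using p_le_s by (simp add: algebra_simps)
  then have "(a + n) * (b + n) / ((a + b + n) * (n + 1)) \<le> 1"
    using s_pos by (simp add: divide_le_eq_1)
  then have "u n * ((a + n) * (b + n) / ((a + b + n) * (n + 1))) \<le> u n * 1"
    by (intro mult_left_mono) (use u_pos[of n] in auto)
  then show ?thesis by (subst u_Suc) simp
qed
lemma u_le1: "u n \<le> 1"
  by (induction n) (auto intro: order_trans[OF u_dec])
lemma cG_le1: "cG n \<le> 1"
proof -
  have "(a + b) / (a + b + n) \<le> 1" using s_pos by simp
  then show ?thesis using cG_eq[of n] u_le1[of n] u_pos[of n]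
    by (metis mult_le_one less_imp_le divide_nonneg_pos add_pos_nonneg of_nat_0_le_iff s_pos)
qed

lemma v_dec: "v (Suc n) \<le> v n"
proof -
  have "(a + 1 + n) * (b + 1 + n) \<le> (a + b + 2 + n) * (n + 1)"
    using p_le_quarter by (simp add: algebra_simps)
  then have "(a + 1 + n) * (b + 1 + n) / ((a + b + 2 + n) * (n + 1)) \<le> 1"
    using s_pos by (simp add: divide_le_eq_1)
  then have "v n * ((a + 1 + n) * (b + 1 + n) / ((a + b + 2 + n) * (n + 1))) \<le> v n * 1"
    by (intro mult_left_mono) (use v_pos[of n] in auto)
  then show ?thesis by (subst v_Suc) simp
qed
lemma v_le1: "v n \<le> 1"
  by (induction n) (auto intro: order_trans[OF v_dec])
lemma v_le_v1: "n \<ge> 1 \<Longrightarrow> v n \<le> v 1"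
proof (induction n)
  case (Suc n) then show ?case by (cases "n = 0") (auto intro: order_trans[OF v_dec])
qed simp
lemma v1_lt1: "v 1 < 1"
proof -
  have "v 1 = (a + 1) * (b + 1) / (a + b + 2)" using v_Suc[of 0] by simp
  also have "\<dots> < 1" using p_le_quarter s_pos ab_le by (simp add: divide_less_eq_1 algebra_simps)
  finally show ?thesis .
qed
lemma v_bound6: "(n + 6) * v n \<le> 6"
proof (induction n)
  case 0 then show ?case by simp
next
  case (Suc n)
  have key: "(n + 7) * ((a + 1 + n) * (b + 1 + n)) \<le> (n + 6) * ((a + b + 2 + n) * (n + 1))"
  proof -
    have "(n + 6) * ((a + b + 2 + n) * (n + 1)) - (n + 7) * ((a + 1 + n) * (b + 1 + n))
          = (5 - (a + b) - a * b) * n + (5 - (a + b) - 7 * (a * b))"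
      by (simp add: algebra_simps)
    also have "\<dots> \<ge> 0" using ab_le p_le_quarter by (intro add_nonneg_nonneg mult_nonneg_nonneg) auto
    finally show ?thesis by simp
  qed
  have "(Suc n + 6) * v (Suc n) = v n * ((n + 7) * ((a + 1 + n) * (b + 1 + n)) / ((a + b + 2 + n) * (n + 1)))"
    using v_Suc[of n] by (simp add: algebra_simps)
  also have "\<dots> \<le> v n * ((n + 6) * ((a + b + 2 + n) * (n + 1)) / ((a + b + 2 + n) * (n + 1)))"
    using key v_pos[of n] s_pos by (intro mult_left_mono divide_right_mono) auto
  also have "\<dots> = (n + 6) * v n"
  proof -
    have d: "(a + b + 2 + n) * (n + 1) \<noteq> 0" using s_pos by auto
    have "real (n + 6) * ((a + b + 2 + n) * (n + 1)) / ((a + b + 2 + n) * (n + 1)) = n + 6"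
      using d by (rule nonzero_mult_div_cancel_right)
    then show ?thesis by simp
  qed
  also have "\<dots> \<le> 6" using Suc by simp
  finally show ?case by simp
qed

lemmas facts = s_pos p_pos p_le_s p_le_quarter p_quarter

lemma u_abs: "\<bar>u n\<bar> \<le> 1" using u_pos[of n] u_le1[of n] by simp
lemma cG_abs: "\<bar>cG n\<bar> \<le> 1" using cG_pos[of n] cG_le1[of n] by simp
lemma v_abs: "\<bar>v n\<bar> \<le> 1" using v_pos[of n] v_le1[of n] by simp

lemma Fs_series: "Fs a b x = (\<Sum>n. u n * x ^ n)"
  unfolding Fs_def hyp2F1_alt ..
lemma Gs_series: "Gs a b x = a * b / (a + b) * (\<Sum>n. cG n * x ^ n)"
  unfolding Gs_def hyp2F1_alt ..
lemma Ws_series: "Ws a b x = (a * b)^2 / ((a + b) * (a + b + 1)) * (\<Sum>n. v n * x ^ n)"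
  unfolding Ws_def hyp2F1_alt ..

lemma Fs_fun: "Fs a b = (\<lambda>x. \<Sum>n. u n * x ^ n)"
  using Fs_series by auto
lemma Gs_fun: "Gs a b = (\<lambda>x. a * b / (a + b) * (\<Sum>n. cG n * x ^ n))"
  using Gs_series by auto
lemma Ws_fun: "Ws a b = (\<lambda>x. (a * b)^2 / ((a + b) * (a + b + 1)) * (\<Sum>n. v n * x ^ n))"
  using Ws_series by auto

lemma coeff_id: "diffs u n - (if n = 0 then 0 else diffs u (n - 1)) = a * b / (a + b) * cG n"
proof -
  have s: "a + b > 0" using facts by simp
  have gen: "diffs u k = u k * ((a + k) * (b + k) / (a + b + k))" for k
  proof -
    have ne: "a + b + k \<noteq> 0" "1 + real k \<noteq> 0" using s by auto
    show ?thesis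
      unfolding diffs_def u_Suc using ne by (simp add: divide_simps)
  qed
  show ?thesis
  proof (cases n)
    case 0
    then show ?thesis using gen[of 0] by simp
  next
    case (Suc m)
    have ne: "a + b + Suc m \<noteq> 0" using s by simp
    have e1: "diffs u n = u (Suc m) * ((a + Suc m) * (b + Suc m) / (a + b + Suc m))"
      using gen[of n] Suc by simp
    have e2: "diffs u m = Suc m * u (Suc m)" unfolding diffs_def by simp
    have "diffs u n - diffs u m = u (Suc m) * ((a + Suc m) * (b + Suc m) / (a + b + Suc m) - Suc m)"
      unfolding e1 e2 by (simp add: algebra_simps)
    also have "(a + Suc m) * (b + Suc m) / (a + b + Suc m) - Suc m = a * b / (a + b + Suc m)"
      using ne by (simp add: divide_simps) (simp add: algebra_simps)
    finally have "diffs u n - diffs u m = u (Suc m) * (a * b / (a + b + Suc m))" .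
    moreover have "a * b / (a + b) * cG n = u (Suc m) * (a * b / (a + b + Suc m))"
      using cG_eq[of n] Suc s by (simp add: field_simps)
    ultimately show ?thesis using Suc by simp
  qed
qed

lemma Fs_deriv:
  assumes "\<bar>x\<bar> < 1"
  shows "(Fs a b has_real_derivative Gs a b x / (1 - x)) (at x)"
proof -
  define D where "D = (\<Sum>n. diffs u n * x ^ n)"
  have d: "(Fs a b has_real_derivative D) (at x)"
    unfolding Fs_fun D_def by (rule powser_bdd_deriv[OF u_abs assms])
  have "(\<lambda>n. diffs u n * x ^ n) sums D"
    unfolding D_def using powser_bdd_diffs_summable[OF u_abs assms] by (rule summable_sums)
  from sums_shift_mult[OF this] have "(\<lambda>n. (a * b / (a + b)) * (cG n * x ^ n)) sums ((1 - x) * D)"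
    by (simp add: coeff_id mult.assoc)
  moreover have "(\<lambda>n. (a * b / (a + b)) * (cG n * x ^ n)) sums Gs a b x"
    unfolding Gs_series by (intro sums_mult summable_sums powser_bdd_summable[OF cG_abs assms])
  ultimately have "(1 - x) * D = Gs a b x" by (rule sums_unique2)
  then have "D = Gs a b x / (1 - x)" using assms by (simp add: field_simps)
  then show ?thesis using d by simp
qed

lemma Gs_deriv:
  assumes "\<bar>x\<bar> < 1"
  shows "(Gs a b has_real_derivative Ws a b x) (at x)"
proof -
  have s: "a + b > 0" using facts by simp
  have d: "((\<lambda>x. \<Sum>n. cG n * x ^ n) has_real_derivative (\<Sum>n. diffs cG n * x ^ n)) (at x)"
    by (rule powser_bdd_deriv[OF cG_abs assms])
  have dc: "diffs cG n = a * b / (a + b + 1) * v n" for n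
    using hc_diffs[of "a + b + 1" a b n] s by (simp add: add.assoc)
  have "(\<Sum>n. diffs cG n * x ^ n) = (\<Sum>n. a * b / (a + b + 1) * (v n * x ^ n))"
    unfolding dc by (simp add: mult.assoc)
  also have "\<dots> = a * b / (a + b + 1) * (\<Sum>n. v n * x ^ n)"
    by (rule suminf_mult[OF powser_bdd_summable[OF v_abs assms]])
  finally have "(\<Sum>n. diffs cG n * x ^ n) = a * b / (a + b + 1) * (\<Sum>n. v n * x ^ n)" .
  then have "((\<lambda>x. a * b / (a + b) * (\<Sum>n. cG n * x ^ n)) has_real_derivative
      a * b / (a + b) * (a * b / (a + b + 1) * (\<Sum>n. v n * x ^ n))) (at x)"
    using DERIV_cmult[OF d, of "a * b / (a + b)"] by simp
  moreover have "a * b / (a + b) * (a * b / (a + b + 1) * (\<Sum>n. v n * x ^ n)) = Ws a b x"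
    unfolding Ws_series by (simp add: power2_eq_square)
  ultimately show ?thesis unfolding Gs_fun by simp
qed

lemma Ws_cont:
  assumes "\<bar>x\<bar> < 1"
  shows "isCont (Ws a b) x"
  unfolding Ws_fun by (intro continuous_intros powser_bdd_isCont[OF v_abs assms])

lemma Fs_cont: "\<bar>x\<bar> < 1 \<Longrightarrow> isCont (Fs a b) x"
  using Fs_deriv DERIV_isCont by blast
lemma Gs_cont: "\<bar>x\<bar> < 1 \<Longrightarrow> isCont (Gs a b) x"
  using Gs_deriv DERIV_isCont by blast


lemma nonneg_term: "0 \<le> (x::real) \<Longrightarrow> 0 < c \<Longrightarrow> 0 \<le> c * x ^ n"
  by simp

lemma powser_nonneg_le_partial:
  fixes c :: "nat \<Rightarrow> real"
  assumes "summable (\<lambda>n. c n * x ^ n)" "\<And>n. n \<ge> N \<Longrightarrow> c n * x ^ n \<ge> 0"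
  shows "(\<Sum>n<N. c n * x ^ n) \<le> (\<Sum>n. c n * x ^ n)"
  using assms by (intro sum_le_suminf) auto

lemma Fs_ge:
  assumes "0 \<le> x" "x < 1"
  shows "Fs a b x \<ge> 1 + a * b / (a + b) * x"
proof -
  have ax: "\<bar>x\<bar> < 1" using assms by simp
  have "(\<Sum>n<2. u n * x ^ n) \<le> (\<Sum>n. u n * x ^ n)"
    using u_pos assms by (intro powser_nonneg_le_partial powser_bdd_summable[OF u_abs ax] nonneg_term) auto
  moreover have "(\<Sum>n<2. u n * x ^ n) = 1 + a * b / (a + b) * x"
    using u_Suc[of 0] by (simp add: numeral_2_eq_2)
  ultimately show ?thesis unfolding Fs_series by simp
qed

lemma Fs_ge1: "0 \<le> x \<Longrightarrow> x < 1 \<Longrightarrow> Fs a b x \<ge> 1"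
  using Fs_ge[of x] facts by (smt (verit) divide_nonneg_pos mult_nonneg_nonneg)

lemma Fs_0: "Fs a b 0 = 1"
  unfolding Fs_series by simp

lemma Gs_ge:
  assumes "0 \<le> x" "x < 1"
  shows "Gs a b x \<ge> a * b / (a + b)"
proof -
  have ax: "\<bar>x\<bar> < 1" using assms by simp
  have "(\<Sum>n<1. cG n * x ^ n) \<le> (\<Sum>n. cG n * x ^ n)"
    using cG_pos assms by (intro powser_nonneg_le_partial powser_bdd_summable[OF cG_abs ax] nonneg_term) auto
  then have "1 \<le> (\<Sum>n. cG n * x ^ n)" by simp
  moreover have "a * b / (a + b) > 0" using facts by simp
  ultimately have "a * b / (a + b) * 1 \<le> a * b / (a + b) * (\<Sum>n. cG n * x ^ n)"
    by (intro mult_left_mono) auto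
  then show ?thesis unfolding Gs_series by simp
qed

lemma Gs_le:
  assumes "0 \<le> x" "x < 1"
  shows "Gs a b x \<le> a * b / (a + b) * Fs a b x"
proof -
  have ax: "\<bar>x\<bar> < 1" using assms by simp
  have "cG n * x ^ n \<le> u n * x ^ n" for n
  proof -
    have "(a + b) / (a + b + n) \<le> 1" using facts by simp
    then have "u n * ((a + b) / (a + b + n)) \<le> u n" using u_pos[of n] by (intro mult_left_le) auto
    then have "cG n \<le> u n" using cG_eq[of n] by simp
    then show ?thesis using assms by (simp add: mult_right_mono)
  qed
  then have "(\<Sum>n. cG n * x ^ n) \<le> (\<Sum>n. u n * x ^ n)"
    by (intro suminf_le powser_bdd_summable[OF cG_abs ax] powser_bdd_summable[OF u_abs ax])
  then show ?thesis unfolding Gs_series Fs_series using facts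
    by (intro mult_left_mono) auto
qed

lemma V_nonneg: "0 \<le> x \<Longrightarrow> x < 1 \<Longrightarrow> (\<Sum>n. v n * x ^ n) \<ge> 0"
  using v_pos by (intro suminf_nonneg powser_bdd_summable[OF v_abs] nonneg_term) auto

lemma Ws_nonneg: "0 \<le> x \<Longrightarrow> x < 1 \<Longrightarrow> Ws a b x \<ge> 0"
  unfolding Ws_series using V_nonneg facts by (intro mult_nonneg_nonneg) auto

lemma H_le:
  assumes "0 \<le> x" "x < 1"
  shows "(1 - x) * (\<Sum>n. v n * x ^ n) \<le> 1 - (1 - v 1) * x"
proof -
  have ax: "\<bar>x\<bar> < 1" using assms by simp
  define f where "f n = (v n - (if n = 0 then 0 else v (n - 1))) * x ^ n" for n
  have sf: "f sums ((1 - x) * (\<Sum>n. v n * x ^ n))"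
    unfolding f_def by (intro sums_shift_mult summable_sums powser_bdd_summable[OF v_abs ax])
  have "(\<Sum>n<2. - f n) \<le> (\<Sum>n. - f n)"
  proof (intro sum_le_suminf summable_minus)
    show "summable f" using sf by (simp add: sums_iff)
    fix n :: nat assume "n \<in> - {..<2}"
    then obtain m where m: "n = Suc m" "m \<ge> 1" by (cases n) auto
    have "v n \<le> v m" using m(1) v_dec by simp
    then show "0 \<le> - f n" unfolding f_def using m assms by (simp add: mult_nonpos_nonneg)
  qed simp
  then have "(\<Sum>n. f n) \<le> (\<Sum>n<2. f n)"
    using sf by (simp add: suminf_minus sums_iff sum_negf)
  moreover have "(\<Sum>n<2. f n) = 1 - (1 - v 1) * x"
    unfolding f_def by (simp add: numeral_2_eq_2 algebra_simps)
  ultimately show ?thesis using sf by (simp add: sums_iff)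
qed

lemma ell_sums:
  assumes "0 \<le> x" "x < 1"
  shows "(\<lambda>n. x ^ n / n) sums (- ln (1 - x))"
proof -
  have "(\<lambda>n. - ((- (- x)) ^ n) / of_nat n) sums ln (1 + - x)"
    using assms by (intro ln_series') auto
  then have "(\<lambda>n. - (x ^ n / n)) sums ln (1 - x)" by simp
  then show ?thesis using sums_minus by fastforce
qed

lemma V_le_log:
  assumes "0 \<le> x" "x < 1"
  shows "(\<Sum>n. v n * x ^ n) \<le> 1 + 6 * (- ln (1 - x))"
proof -
  have ax: "\<bar>x\<bar> < 1" using assms by simp
  have s1: "(\<lambda>n. if n = 0 then 1 else 0) sums (1::real)"
    using sums_single[of 0 "\<lambda>_. 1::real"] by simp
  have s2: "(\<lambda>n. (if n = 0 then 1 else 0) + 6 * (x ^ n / n)) sums (1 + 6 * (- ln (1 - x)))"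
    by (intro sums_add s1 sums_mult ell_sums assms)
  have le: "v n * x ^ n \<le> (if n = 0 then 1 else 0) + 6 * (x ^ n / n)" for n
  proof (cases "n = 0")
    case False
    have "(n + 6) * v n \<le> 6" using v_bound6[of n] by simp
    then have "n * v n \<le> 6" using v_pos[of n] by (simp add: algebra_simps)
    then have "v n \<le> 6 / n" using False by (simp add: field_simps)
    then have "v n * x ^ n \<le> 6 / n * x ^ n" using assms by (intro mult_right_mono) auto
    then show ?thesis using False by simp
  qed simp
  show ?thesis
    using sums_le[OF le summable_sums[OF powser_bdd_summable[OF v_abs ax]] s2] .
qed


lemma ell_deriv: "(t::real) < 1 \<Longrightarrow> ((\<lambda>t. - ln (1 - t)) has_real_derivative 1 / (1 - t)) (at t)"
  by (rule derivative_eq_intros refl | simp)+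

lemma ell_bounds:
  assumes "0 \<le> (x::real)" "x < 1"
  shows "- ln (1 - x) \<ge> 0" "(1 - x) * (- ln (1 - x)) \<le> 1" "(1 - x) * (- ln (1 - x))^2 \<le> 4"
proof -
  define y where "y = - ln (1 - x)"
  have "ln (1 - x) \<le> (1 - x) - 1" using assms by (intro ln_le_minus_one) auto
  then have "ln (1 - x) \<le> 0" using assms by simp
  then show "- ln (1 - x) \<ge> 0" by simp
  then have y0: "y \<ge> 0" by (simp add: y_def)
  have ex: "(1 - x) = exp (- y)" using assms by (simp add: y_def)
  have "y \<le> exp y" using exp_ge_add_one_self[of y] by linarith
  then have "y * exp (- y) \<le> 1" by (simp add: exp_minus field_simps)
  then show "(1 - x) * (- ln (1 - x)) \<le> 1" unfolding ex y_def[symmetric] by (simp add: mult.commute)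
  have "1 + y / 2 \<le> exp (y / 2)" by (rule exp_ge_add_one_self)
  then have "(1 + y / 2)^2 \<le> exp (y / 2) ^ 2" using y0 by (intro power_mono) auto
  also have "exp (y / 2) ^ 2 = exp y" by (simp add: exp_double[symmetric])
  finally have "y^2 \<le> 4 * exp y" using y0 by (simp add: power2_eq_square algebra_simps)
  then have "y^2 * exp (- y) \<le> 4" by (simp add: exp_minus field_simps)
  then show "(1 - x) * (- ln (1 - x))^2 \<le> 4" unfolding ex y_def[symmetric] by (simp add: mult.commute)
qed

lemma F_le_GL:
  assumes "0 \<le> x" "x < 1"
  shows "Fs a b x \<le> 1 + Gs a b x * (- ln (1 - x))"
proof -
  define f where "f t = 1 + Gs a b t * (- ln (1 - t)) - Fs a b t" for t
  have "f 0 \<le> f x"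
  proof (rule DERIV_nonneg_imp_nondecreasing[OF assms(1)])
    fix t assume t: "0 \<le> t" "t \<le> x"
    then have t1: "\<bar>t\<bar> < 1" "t < 1" using assms by auto
    have "(f has_real_derivative (Gs a b t * (1 / (1 - t)) + Ws a b t * (- ln (1 - t)) - Gs a b t / (1 - t))) (at t)"
      unfolding f_def[abs_def]
      by (rule derivative_eq_intros ell_deriv[OF t1(2)] Gs_deriv[OF t1(1)] Fs_deriv[OF t1(1)] refl | simp)+
    moreover have "Gs a b t * (1 / (1 - t)) + Ws a b t * (- ln (1 - t)) - Gs a b t / (1 - t) \<ge> 0"
      using mult_nonneg_nonneg[OF Ws_nonneg[of t] ell_bounds(1)[of t]] t1 t assms by simp
    ultimately show "\<exists>y. (f has_real_derivative y) (at t) \<and> 0 \<le> y" by blast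
  qed
  moreover have "f 0 = 0" unfolding f_def using Fs_0 by simp
  ultimately show ?thesis unfolding f_def by simp
qed


lemma W_ell_le:
  assumes "0 \<le> t" "t < 1"
  shows "Ws a b t * (- ln (1 - t)) \<le> 6 * ((a * b)^2 / ((a + b) * (a + b + 1))) * ((- ln (1 - t)) + (- ln (1 - t))^2)"
proof -
  define w where "w = (a * b)^2 / ((a + b) * (a + b + 1))"
  define l where "l = - ln (1 - t)"
  have w0: "w \<ge> 0" unfolding w_def using facts by simp
  have l0: "l \<ge> 0" unfolding l_def using ell_bounds(1)[OF assms] .
  have "Ws a b t = w * (\<Sum>n. v n * t ^ n)" unfolding Ws_series w_def ..
  also have "\<dots> \<le> w * (1 + 6 * l)" unfolding l_def using V_le_log[OF assms] w0 by (intro mult_left_mono)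
  finally have "Ws a b t * l \<le> w * (1 + 6 * l) * l" using l0 by (intro mult_right_mono)
  also have "\<dots> \<le> 6 * w * (l + l^2)" using w0 l0 by (simp add: algebra_simps power2_eq_square)
  finally show ?thesis unfolding w_def l_def .
qed

lemma F_ge_GL:
  assumes "0 \<le> x" "x < 1"
  shows "Fs a b x \<ge> Gs a b x * (- ln (1 - x)) + 1 - 18 * ((a * b)^2 / ((a + b) * (a + b + 1)))"
proof -
  define K where "K = 6 * ((a * b)^2 / ((a + b) * (a + b + 1)))"
  have K0: "K \<ge> 0" unfolding K_def using facts by simp
  define P where "P t = 3 * t - 3 * ((1 - t) * (- ln (1 - t))) - (1 - t) * (- ln (1 - t))^2" for t :: real
  define f where "f t = Fs a b t - Gs a b t * (- ln (1 - t)) + K * P t" for t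
  have "f 0 \<le> f x"
  proof (rule DERIV_nonneg_imp_nondecreasing[OF assms(1)])
    fix t assume t: "0 \<le> t" "t \<le> x"
    then have t1: "\<bar>t\<bar> < 1" "t < 1" using assms by auto
    define l where "l = - ln (1 - t)"
    have "(f has_real_derivative (K * ((- ln (1 - t)) + (- ln (1 - t))^2) - Ws a b t * (- ln (1 - t)))) (at t)"
      unfolding f_def[abs_def] P_def
      by (rule derivative_eq_intros ell_deriv[OF t1(2)] Gs_deriv[OF t1(1)] Fs_deriv[OF t1(1)] refl | use t1 in simp)+
    moreover have "K * ((- ln (1 - t)) + (- ln (1 - t))^2) - Ws a b t * (- ln (1 - t)) \<ge> 0"
      using W_ell_le[OF t(1) t1(2)] unfolding K_def by simp
    ultimately show "\<exists>y. (f has_real_derivative y) (at t) \<and> 0 \<le> y" by blast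
  qed
  moreover have "f 0 = 1" unfolding f_def P_def using Fs_0 by simp
  moreover have "P x \<le> 3"
  proof -
    have "(1 - x) * (- ln (1 - x)) \<ge> 0" "(1 - x) * (- ln (1 - x))^2 \<ge> 0"
      using mult_nonneg_nonneg[OF _ ell_bounds(1)[OF assms], of "1 - x"] assms by simp_all
    then show ?thesis unfolding P_def using assms by linarith
  qed
  moreover have "K * P x \<le> K * 3" using \<open>P x \<le> 3\<close> K0 by (rule mult_left_mono)
  ultimately have "Fs a b x - Gs a b x * (- ln (1 - x)) \<ge> 1 - K * 3"
    unfolding f_def by linarith
  then show ?thesis unfolding K_def by simp
qed


lemma h_eq: "h_fun a b x = Gs a b x + (1 - x) * Ws a b x"
  unfolding h_fun_def Gs_def Ws_def by (simp add: algebra_simps)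

lemma g_eq: "g_fun a b x = - (2 * Gs a b x + Fs a b x)"
  unfolding g_fun_def Gs_def Fs_def by (simp add: algebra_simps)

lemma r_pos: "a * b / (a + b) > 0" using facts by simp
lemma r_quarter: "a * b / (a + b) \<le> 1 / 4"
proof -
  have "4 * (a * b) \<le> (a + b)" using facts ab_le
    by (smt (verit) mult_left_le power2_eq_square)
  then show ?thesis using facts by (simp add: field_simps)
qed

lemma h_ge_G: "0 \<le> x \<Longrightarrow> x < 1 \<Longrightarrow> h_fun a b x \<ge> Gs a b x"
  unfolding h_eq using Ws_nonneg[of x] by simp

lemma h_ge_r: "0 \<le> x \<Longrightarrow> x < 1 \<Longrightarrow> h_fun a b x \<ge> a * b / (a + b)"
  using h_ge_G Gs_ge by force

lemma h_pos: "0 \<le> x \<Longrightarrow> x < 1 \<Longrightarrow> h_fun a b x > 0"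
  using h_ge_r r_pos by force

lemma q_ge_8w: "(1 - 2 * (a * b / (a + b)))^2 \<ge> 8 * ((a * b)^2 / ((a + b) * (a + b + 1)))"
proof -
  define s where "s = a + b"
  define p where "p = a * b"
  have s0: "s > 0" "s \<le> 1" using facts ab_le by (auto simp: s_def)
  have p0: "p > 0" using facts by (simp add: p_def)
  have "4 * p \<le> s" using facts ab_le unfolding s_def p_def
    by (smt (verit) mult_left_le power2_eq_square)
  then have "(s - 2 * p)^2 \<ge> (2 * p)^2" using p0 by (intro power_mono) auto
  then have "(s - 2 * p)^2 * (s + 1) \<ge> (2 * p)^2 * (2 * s)" using s0 p0
    by (intro mult_mono) auto
  then have key: "(s - 2 * p)^2 * (s + 1) \<ge> 8 * p^2 * s" by (simp add: power2_eq_square algebra_simps)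
  have "(1 - 2 * (p / s))^2 = (s - 2 * p)^2 / s^2" using s0 by (simp add: field_simps)
  also have "\<dots> = ((s - 2 * p)^2 * (s + 1)) / (s^2 * (s + 1))" using s0 by simp
  also have "\<dots> \<ge> (8 * p^2 * s) / (s^2 * (s + 1))"
    using key s0 by (intro divide_right_mono) auto
  also have "(8 * p^2 * s) / (s^2 * (s + 1)) = 8 * (p^2 / (s * (s + 1)))"
    using s0 by (simp add: power2_eq_square)
  finally show ?thesis unfolding s_def p_def .
qed

lemma Delta_eq: "Delta_fun a b x = (Fs a b x - 2 * Gs a b x)^2 - 8 * ((1 - x) * Ws a b x) * Fs a b x"
  unfolding Delta_fun_def g_eq h_eq by (simp add: Fs_def power2_eq_square algebra_simps)

lemma Delta_lower:
  assumes "0 \<le> x" "x < 1"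
  shows "Delta_fun a b x \<ge> Fs a b x * x * ((1 - 2 * (a * b / (a + b)))^2 * (a * b / (a + b))
            + 8 * ((a * b)^2 / ((a + b) * (a + b + 1))) * (1 - v 1))"
proof -
  define F where "F = Fs a b x"
  define G where "G = Gs a b x"
  define H where "H = (1 - x) * Ws a b x"
  define r where "r = a * b / (a + b)"
  define w where "w = (a * b)^2 / ((a + b) * (a + b + 1))"
  define q where "q = (1 - 2 * r)^2"
  have r0: "r > 0" "r \<le> 1/4" using r_pos r_quarter by (auto simp: r_def)
  have w0: "w > 0" unfolding w_def using facts by (intro divide_pos_pos mult_pos_pos) auto
  have q8w: "q \<ge> 8 * w" using q_ge_8w by (simp add: q_def r_def w_def)
  have F1: "F \<ge> 1 + r * x" using Fs_ge[OF assms] by (simp add: F_def r_def)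
  have Fpos: "F \<ge> 1" using Fs_ge1[OF assms] by (simp add: F_def)
  have GrF: "G \<le> r * F" using Gs_le[OF assms] by (simp add: F_def G_def r_def)
  have Hle: "H \<le> w * (1 - (1 - v 1) * x)"
  proof -
    have "H = w * ((1 - x) * (\<Sum>n. v n * x ^ n))" unfolding H_def Ws_series w_def by simp
    also have "\<dots> \<le> w * (1 - (1 - v 1) * x)" using H_le[OF assms] w0 by (intro mult_left_mono) auto
    finally show ?thesis .
  qed
  have "F - 2 * G \<ge> (1 - 2 * r) * F" using GrF by (simp add: algebra_simps)
  moreover have "(1 - 2 * r) * F \<ge> 0" using r0 Fpos by simp
  ultimately have "(F - 2 * G)^2 \<ge> ((1 - 2 * r) * F)^2" by (intro power_mono) auto
  then have A: "(F - 2 * G)^2 \<ge> q * F^2" by (simp add: q_def power_mult_distrib)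
  have "x * (q * r + 8 * w * (1 - v 1)) \<le> (q - 8 * w) + x * (q * r + 8 * w * (1 - v 1))"
    using q8w by simp
  also have "\<dots> = q * (1 + r * x) - 8 * (w * (1 - (1 - v 1) * x))" by (simp add: algebra_simps)
  also have "\<dots> \<le> q * F - 8 * H"
    using F1 Hle q_def by (smt (verit) mult_left_mono zero_le_power2)
  finally have C: "x * (q * r + 8 * w * (1 - v 1)) \<le> q * F - 8 * H" .
  have "Delta_fun a b x = (F - 2 * G)^2 - 8 * H * F" unfolding Delta_eq F_def G_def H_def ..
  also have "\<dots> \<ge> q * F^2 - 8 * H * F" using A by simp
  also have "q * F^2 - 8 * H * F = F * (q * F - 8 * H)" by (simp add: power2_eq_square algebra_simps)
  also have "F * (q * F - 8 * H) \<ge> F * (x * (q * r + 8 * w * (1 - v 1)))"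
    using C Fpos by (intro mult_left_mono) auto
  finally show ?thesis unfolding F_def q_def r_def w_def by (simp add: mult.assoc)
qed

lemma Delta_nonneg:
  assumes "0 \<le> x" "x < 1"
  shows "Delta_fun a b x \<ge> 0"
proof -
  have "(1 - 2 * (a * b / (a + b)))^2 * (a * b / (a + b)) \<ge> 0" using r_pos by (intro mult_nonneg_nonneg) auto
  moreover have "8 * ((a * b)^2 / ((a + b) * (a + b + 1))) * (1 - v 1) \<ge> 0" using facts v1_lt1
    by (intro mult_nonneg_nonneg divide_nonneg_pos) auto
  ultimately show ?thesis using Delta_lower[OF assms] Fs_ge1[OF assms] assms
    by (smt (verit) mult_nonneg_nonneg)
qed

lemma Delta_pos:
  assumes "0 < x" "x < 1"
  shows "Delta_fun a b x > 0"
proof -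
  have "(1 - 2 * (a * b / (a + b)))^2 * (a * b / (a + b)) \<ge> 0" using r_pos by (intro mult_nonneg_nonneg) auto
  moreover have "8 * ((a * b)^2 / ((a + b) * (a + b + 1))) * (1 - v 1) > 0" using facts v1_lt1
    by (intro mult_pos_pos divide_pos_pos) auto
  ultimately have "(1 - 2 * (a * b / (a + b)))^2 * (a * b / (a + b))
            + 8 * ((a * b)^2 / ((a + b) * (a + b + 1))) * (1 - v 1) > 0" by linarith
  moreover have "Fs a b x > 0" using Fs_ge1[of x] assms by simp
  ultimately have "Fs a b x * x * ((1 - 2 * (a * b / (a + b)))^2 * (a * b / (a + b))
            + 8 * ((a * b)^2 / ((a + b) * (a + b + 1))) * (1 - v 1)) > 0" using assms by simp
  then show ?thesis using Delta_lower[of x] assms by linarith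
qed


lemma Delta_def': "Delta_fun a b x = (g_fun a b x)^2 - 8 * h_fun a b x * Fs a b x"
  unfolding Delta_fun_def Fs_def ..

lemma mg_ge_F: "0 \<le> x \<Longrightarrow> x < 1 \<Longrightarrow> - g_fun a b x \<ge> Fs a b x"
  unfolding g_eq using Gs_ge[of x] r_pos by simp

lemma sqrt_Delta_lt:
  assumes "0 \<le> x" "x < 1"
  shows "sqrt (Delta_fun a b x) < - g_fun a b x"
proof -
  have F1: "Fs a b x \<ge> 1" using Fs_ge1[OF assms] .
  have "8 * h_fun a b x * Fs a b x > 0" using h_pos[OF assms] F1 by simp
  then have "Delta_fun a b x < (g_fun a b x)^2" unfolding Delta_def' by simp
  then have "sqrt (Delta_fun a b x) < sqrt ((g_fun a b x)^2)" by (rule real_sqrt_less_mono)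
  also have "\<dots> = - g_fun a b x" using mg_ge_F[OF assms] F1 by simp
  finally show ?thesis .
qed

lemma omega_minus_pos:
  assumes "0 \<le> x" "x < 1"
  shows "omega_minus a b x > 0"
  unfolding omega_minus_def using sqrt_Delta_lt[OF assms] h_pos[OF assms] by (simp add: divide_pos_pos)

lemma omega_minus_le4:
  assumes "0 \<le> x" "x < 1"
  shows "omega_minus a b x \<le> 4"
proof -
  define g where "g = g_fun a b x"
  define h where "h = h_fun a b x"
  define F where "F = Fs a b x"
  define D where "D = Delta_fun a b x"
  have D0: "D \<ge> 0" unfolding D_def using Delta_nonneg[OF assms] .
  have h0: "h > 0" unfolding h_def using h_pos[OF assms] .
  have F1: "F \<ge> 1" unfolding F_def using Fs_ge1[OF assms] .
  have gF: "- g \<ge> F" unfolding g_def F_def using mg_ge_F[OF assms] .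
  have sq: "sqrt D ^ 2 = D" using D0 by simp
  have prod: "(- g - sqrt D) * (- g + sqrt D) = 8 * h * F"
    using sq unfolding D_def Delta_def' g_def h_def F_def by (simp add: power2_eq_square algebra_simps)
  have pos: "- g + sqrt D \<ge> F" using gF real_sqrt_ge_zero[OF D0] by linarith
  have "(- g - sqrt D) * F \<le> (- g - sqrt D) * (- g + sqrt D)"
    using pos sqrt_Delta_lt[OF assms] unfolding g_def D_def by (intro mult_left_mono) auto
  also have "\<dots> = 8 * h * F" by (rule prod)
  finally have "(- g - sqrt D) \<le> 8 * h" using F1 by simp
  then show ?thesis unfolding omega_minus_def g_def[symmetric] h_def[symmetric] D_def[symmetric]
    using h0 by (simp add: divide_le_eq)
qed

lemma omega_sum:
  assumes "0 \<le> x" "x < 1"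
  shows "omega_plus a b x + omega_minus a b x = - g_fun a b x / h_fun a b x"
  unfolding omega_plus_def omega_minus_def using h_pos[OF assms] by (simp add: field_simps)

lemma omega_plus_le:
  assumes "0 \<le> x" "x < 1"
  shows "omega_plus a b x \<le> - g_fun a b x / h_fun a b x"
  using omega_sum[OF assms] omega_minus_pos[OF assms] by linarith

lemma omega_order:
  assumes "0 \<le> x" "x < 1"
  shows "omega_minus a b x \<le> omega_plus a b x"
  unfolding omega_plus_def omega_minus_def using h_pos[OF assms] Delta_nonneg[OF assms]
  by (intro divide_right_mono) auto

lemma omega_order_strict:
  assumes "0 < x" "x < 1"
  shows "omega_minus a b x < omega_plus a b x"
proof -
  have "sqrt (Delta_fun a b x) > 0" using Delta_pos[OF assms] by simp
  then show ?thesis unfolding omega_plus_def omega_minus_def using h_pos[of x] assms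
    by (intro divide_strict_right_mono) auto
qed

lemma Q_factor:
  assumes "0 \<le> x" "x < 1"
  shows "h_fun a b x * y^2 + g_fun a b x * y + 2 * Fs a b x
       = h_fun a b x * (y - omega_plus a b x) * (y - omega_minus a b x)"
proof -
  define g where "g = g_fun a b x"
  define h where "h = h_fun a b x"
  define F where "F = Fs a b x"
  define D where "D = Delta_fun a b x"
  have D0: "D \<ge> 0" unfolding D_def using Delta_nonneg[OF assms] .
  have h0: "h > 0" unfolding h_def using h_pos[OF assms] .
  have sq: "sqrt D * sqrt D = D" using D0 by simp
  have D_eq: "D = g^2 - 8 * h * F" unfolding D_def Delta_def' g_def h_def F_def ..
  have "h * (y - (- g + sqrt D) / (2 * h)) * (y - (- g - sqrt D) / (2 * h))
        = h * y^2 + g * y + (g^2 - sqrt D * sqrt D) / (4 * h)"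
    using h0 by (simp add: field_simps power2_eq_square)
  also have "(g^2 - sqrt D * sqrt D) / (4 * h) = (g^2 - D) / (4 * h)" by (simp only: sq)
  also have "(g^2 - D) / (4 * h) = 2 * F" unfolding D_eq using h0 by simp
  finally show ?thesis unfolding omega_plus_def omega_minus_def g_def[symmetric] h_def[symmetric]
    D_def[symmetric] F_def[symmetric] by simp
qed

lemma phi_plus_upper:
  assumes "0 \<le> x" "x < 1"
  shows "phi_plus a b x \<le> (a + b) / (a * b) + 2"
proof -
  define l where "l = - ln (1 - x)"
  define r where "r = a * b / (a + b)"
  have l0: "l \<ge> 0" unfolding l_def using ell_bounds(1)[OF assms] .
  have hG: "h_fun a b x \<ge> Gs a b x" using h_ge_G[OF assms] .
  have hr: "h_fun a b x \<ge> r" unfolding r_def using h_ge_r[OF assms] .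
  have r0: "r > 0" unfolding r_def using r_pos .
  have G0: "Gs a b x > 0" using Gs_ge[OF assms] r_pos by linarith
  have h0: "h_fun a b x > 0" using h_pos[OF assms] .
  have "omega_plus a b x \<le> (2 * Gs a b x + Fs a b x) / h_fun a b x"
    using omega_plus_le[OF assms] unfolding g_eq by (simp add: add.commute)
  also have "\<dots> \<le> (2 * Gs a b x + 1 + Gs a b x * l) / h_fun a b x"
    using F_le_GL[OF assms] h0 unfolding l_def by (intro divide_right_mono) auto
  also have "\<dots> = 2 * (Gs a b x / h_fun a b x) + 1 / h_fun a b x + (Gs a b x / h_fun a b x) * l"
    using h0 by (simp add: field_simps)
  also have "\<dots> \<le> 2 * 1 + 1 / r + 1 * l"
  proof -
    have "Gs a b x / h_fun a b x \<le> 1" using hG h0 by simp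
    moreover have "1 / h_fun a b x \<le> 1 / r" using hr r0 by (intro divide_left_mono) auto
    moreover have "Gs a b x / h_fun a b x \<ge> 0" using G0 h0 by simp
    moreover have "(Gs a b x / h_fun a b x) * l \<le> 1 * l"
      using \<open>Gs a b x / h_fun a b x \<le> 1\<close> l0 by (rule mult_right_mono)
    ultimately show ?thesis by linarith
  qed
  finally have "omega_plus a b x \<le> 2 + 1 / r + l" by simp
  then show ?thesis unfolding phi_plus_def l_def r_def by simp
qed

lemma phi_plus_lower:
  assumes "0 \<le> x" "x < 1"
  shows "phi_plus a b x \<ge> - (43 * ((a * b)^2 / ((a + b) * (a + b + 1)))) / (a * b / (a + b)) - 4"
proof -
  define l where "l = - ln (1 - x)"
  define r where "r = a * b / (a + b)"
  define w where "w = (a * b)^2 / ((a + b) * (a + b + 1))"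
  define h where "h = h_fun a b x"
  have l0: "l \<ge> 0" unfolding l_def using ell_bounds(1)[OF assms] .
  have hr: "h \<ge> r" unfolding h_def r_def using h_ge_r[OF assms] .
  have r0: "r > 0" unfolding r_def using r_pos .
  have w0: "w > 0" unfolding w_def using facts by (intro divide_pos_pos mult_pos_pos) auto
  have h0: "h > 0" unfolding h_def using h_pos[OF assms] .
  have G0: "Gs a b x > 0" using Gs_ge[OF assms] r_pos by linarith
  have Hl: "(1 - x) * Ws a b x * l \<le> 25 * w"
  proof -
    have "Ws a b x = w * (\<Sum>n. v n * x ^ n)" unfolding Ws_series w_def ..
    also have "\<dots> \<le> w * (1 + 6 * l)" unfolding l_def using V_le_log[OF assms] w0 by (intro mult_left_mono) auto
    finally have "(1 - x) * Ws a b x * l \<le> (1 - x) * (w * (1 + 6 * l)) * l"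
      using assms l0 by (intro mult_right_mono mult_left_mono) auto
    also have "\<dots> = w * ((1 - x) * l + 6 * ((1 - x) * l^2))" by (simp add: algebra_simps power2_eq_square)
    also have "\<dots> \<le> w * (1 + 6 * 4)"
      using ell_bounds(2,3)[OF assms] w0 unfolding l_def by (intro mult_left_mono) auto
    finally show ?thesis by simp
  qed
  have Fge: "Fs a b x \<ge> Gs a b x * l + 1 - 18 * w" unfolding l_def w_def using F_ge_GL[OF assms] .
  have "h * l = Gs a b x * l + (1 - x) * Ws a b x * l" unfolding h_def h_eq by (simp add: algebra_simps)
  then have F_hl: "Fs a b x \<ge> h * l - 43 * w" using Fge Hl by linarith
  have "l - 43 * w / h = (h * l - 43 * w) / h" using h0 by (simp add: field_simps)
  also have "\<dots> \<le> Fs a b x / h" using F_hl h0 by (intro divide_right_mono) auto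
  finally have "Fs a b x / h \<ge> l - 43 * w / h" .
  moreover have "43 * w / h \<le> 43 * w / r" using hr r0 w0 by (intro divide_left_mono) auto
  ultimately have Fh: "Fs a b x / h \<ge> l - 43 * w / r" by linarith
  have e1: "omega_plus a b x = (2 * Gs a b x + Fs a b x) / h - omega_minus a b x"
    using omega_sum[OF assms] unfolding h_def g_eq by (simp add: add.commute eq_diff_eq)
  have e2: "(2 * Gs a b x + Fs a b x) / h \<ge> Fs a b x / h" using G0 h0 by (intro divide_right_mono) auto
  have "omega_plus a b x \<ge> Fs a b x / h - 4" using e1 e2 omega_minus_le4[OF assms] by linarith
  then have "omega_plus a b x \<ge> l - 43 * w / r - 4" using Fh by linarith
  then show ?thesis unfolding phi_plus_def l_def r_def w_def by simp
qed

lemma phi_minus_upper: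
  assumes "0 \<le> x" "x < 1"
  shows "phi_minus a b x \<le> ln (1 - x) + 4"
  unfolding phi_minus_def using omega_minus_le4[OF assms] by simp

lemma phi_minus_le4: "0 \<le> x \<Longrightarrow> x < 1 \<Longrightarrow> phi_minus a b x \<le> 4"
  using phi_minus_upper[of x] ell_bounds(1)[of x] by linarith

lemma phi_minus_0_pos: "phi_minus a b 0 > 0"
  unfolding phi_minus_def using omega_minus_pos[of 0] by simp

lemma phi_plus_0_pos: "phi_plus a b 0 > 0"
  unfolding phi_plus_def using omega_minus_pos[of 0] omega_order[of 0] by simp


lemma phi_plus_fun: "phi_plus a b = (\<lambda>x. ln (1 - x) + ((2 * Gs a b x + Fs a b x) + sqrt ((2 * Gs a b x + Fs a b x)^2
   - 8 * (Gs a b x + (1 - x) * Ws a b x) * Fs a b x)) / (2 * (Gs a b x + (1 - x) * Ws a b x)))"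
proof (rule ext)
  fix x
  have e: "(- (2 * Gs a b x + Fs a b x))^2 = (2 * Gs a b x + Fs a b x)^2" by (rule power2_minus)
  show "phi_plus a b x = ln (1 - x) + ((2 * Gs a b x + Fs a b x) + sqrt ((2 * Gs a b x + Fs a b x)^2
   - 8 * (Gs a b x + (1 - x) * Ws a b x) * Fs a b x)) / (2 * (Gs a b x + (1 - x) * Ws a b x))"
    unfolding phi_plus_def omega_plus_def Delta_def' g_eq h_eq e by simp
qed

lemma phi_minus_fun: "phi_minus a b = (\<lambda>x. ln (1 - x) + ((2 * Gs a b x + Fs a b x) - sqrt ((2 * Gs a b x + Fs a b x)^2
   - 8 * (Gs a b x + (1 - x) * Ws a b x) * Fs a b x)) / (2 * (Gs a b x + (1 - x) * Ws a b x)))"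
proof (rule ext)
  fix x
  have e: "(- (2 * Gs a b x + Fs a b x))^2 = (2 * Gs a b x + Fs a b x)^2" by (rule power2_minus)
  show "phi_minus a b x = ln (1 - x) + ((2 * Gs a b x + Fs a b x) - sqrt ((2 * Gs a b x + Fs a b x)^2
   - 8 * (Gs a b x + (1 - x) * Ws a b x) * Fs a b x)) / (2 * (Gs a b x + (1 - x) * Ws a b x))"
    unfolding phi_minus_def omega_minus_def Delta_def' g_eq h_eq e by simp
qed

lemma phi_plus_cont:
  assumes "0 \<le> x" "x < 1"
  shows "isCont (phi_plus a b) x"
proof -
  have ax: "\<bar>x\<bar> < 1" using assms by simp
  have "Gs a b x + (1 - x) * Ws a b x \<noteq> 0" using h_pos[OF assms] h_eq by simp
  then show ?thesis unfolding phi_plus_fun using assms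
    by (intro continuous_intros Fs_cont[OF ax] Gs_cont[OF ax] Ws_cont[OF ax]) auto
qed

lemma phi_minus_cont:
  assumes "0 \<le> x" "x < 1"
  shows "isCont (phi_minus a b) x"
proof -
  have ax: "\<bar>x\<bar> < 1" using assms by simp
  have "Gs a b x + (1 - x) * Ws a b x \<noteq> 0" using h_pos[OF assms] h_eq by simp
  then show ?thesis unfolding phi_minus_fun using assms
    by (intro continuous_intros Fs_cont[OF ax] Gs_cont[OF ax] Ws_cont[OF ax]) auto
qed


end


context
  fixes a b :: real
  assumes a_pos: "a > 0" and b_pos: "b > 0" and ab_le: "a + b \<le> 1"
begin

lemma alg1: fixes y L G F :: real assumes "y \<noteq> 0" "L \<noteq> 0"
  shows "(G / y * L - F * (1 / y)) / (L * L) = (G * L - F) / (y * L^2)"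
  using assms by (simp add: field_simps power2_eq_square)

lemma alg2: fixes y L W G F :: real assumes "y \<noteq> 0" "L \<noteq> 0"
  shows "(((W * L + 1 / y * G) - G / y) * (y * L^2) - (G * L - F) * ((-1) * L^2 + (of_nat 2 * (1 / y * L ^ (2 - Suc 0))) * y))
       / ((y * L^2) * (y * L^2))
     = ((G + y * W) * L^2 + (- (2 * G + F)) * L + 2 * F) / (y^2 * L^3)"
  using assms by (simp add: field_simps power2_eq_square power3_eq_cube)

lemmas Fs_deriv' = Fs_deriv[OF a_pos b_pos ab_le]
lemmas Gs_deriv' = Gs_deriv[OF a_pos b_pos ab_le]

definition "fd1 c x = (Gs a b x * (c - ln (1 - x)) - Fs a b x) / ((1 - x) * (c - ln (1 - x))^2)"
definition "fd2 c x = (h_fun a b x * (c - ln (1 - x))^2 + g_fun a b x * (c - ln (1 - x)) + 2 * Fs a b x)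
    / ((1 - x)^2 * (c - ln (1 - x))^3)"

lemma f_abc_fun: "f_abc a b c = (\<lambda>x. Fs a b x / (c - ln (1 - x)))"
  by (rule ext) (simp add: f_abc_def Fs_def)

lemma L_deriv: "(x::real) < 1 \<Longrightarrow> ((\<lambda>t. c - ln (1 - t)) has_real_derivative 1 / (1 - x)) (at x)"
  by (rule derivative_eq_intros refl | simp)+

lemma f_deriv:
  assumes "\<bar>x\<bar> < 1" "c - ln (1 - x) \<noteq> 0"
  shows "(f_abc a b c has_real_derivative fd1 c x) (at x)"
proof -
  have x1: "1 - x \<noteq> 0" "x < 1" using assms by auto
  have "((\<lambda>t. Fs a b t / (c - ln (1 - t))) has_real_derivative
      (Gs a b x / (1 - x) * (c - ln (1 - x)) - Fs a b x * (1 / (1 - x))) / ((c - ln (1 - x)) * (c - ln (1 - x)))) (at x)"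
    by (rule DERIV_divide[OF Fs_deriv'[OF assms(1)] L_deriv[OF x1(2)] assms(2)])
  moreover have "(Gs a b x / (1 - x) * (c - ln (1 - x)) - Fs a b x * (1 / (1 - x))) / ((c - ln (1 - x)) * (c - ln (1 - x)))
     = fd1 c x"
    unfolding fd1_def using alg1[OF x1(1) assms(2)] .
  ultimately show ?thesis unfolding f_abc_fun by simp
qed

lemma f1_deriv:
  assumes "\<bar>x\<bar> < 1" "c - ln (1 - x) \<noteq> 0"
  shows "(fd1 c has_real_derivative fd2 c x) (at x)"
proof -
  have x1: "1 - x \<noteq> 0" "x < 1" using assms by auto
  have dN: "((\<lambda>t. Gs a b t * (c - ln (1 - t)) - Fs a b t) has_real_derivative
     (Ws a b x * (c - ln (1 - x)) + 1 / (1 - x) * Gs a b x) - Gs a b x / (1 - x)) (at x)"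
    by (rule DERIV_diff[OF DERIV_mult[OF Gs_deriv'[OF assms(1)] L_deriv[OF x1(2)]] Fs_deriv'[OF assms(1)]])
  have d1: "((\<lambda>t::real. 1 - t) has_real_derivative -1) (at x)"
    using DERIV_diff[OF DERIV_const DERIV_ident, of 1 x] by simp
  have dD: "((\<lambda>t. (1 - t) * (c - ln (1 - t))^2) has_real_derivative
     (-1) * (c - ln (1 - x))^2 + (of_nat 2 * (1 / (1 - x) * (c - ln (1 - x)) ^ (2 - Suc 0))) * (1 - x)) (at x)"
    by (rule DERIV_mult[OF d1 DERIV_power[OF L_deriv[OF x1(2)]]])
  have nz: "(1 - x) * (c - ln (1 - x))^2 \<noteq> 0" using x1 assms(2) by simp
  have "(fd1 c has_real_derivative
      (((Ws a b x * (c - ln (1 - x)) + 1 / (1 - x) * Gs a b x) - Gs a b x / (1 - x)) * ((1 - x) * (c - ln (1 - x))^2)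
        - (Gs a b x * (c - ln (1 - x)) - Fs a b x) * ((-1) * (c - ln (1 - x))^2 + (of_nat 2 * (1 / (1 - x) * (c - ln (1 - x)) ^ (2 - Suc 0))) * (1 - x)))
       / (((1 - x) * (c - ln (1 - x))^2) * ((1 - x) * (c - ln (1 - x))^2))) (at x)"
    unfolding fd1_def[abs_def] by (rule DERIV_divide[OF dN dD nz])
  moreover have "(((Ws a b x * (c - ln (1 - x)) + 1 / (1 - x) * Gs a b x) - Gs a b x / (1 - x)) * ((1 - x) * (c - ln (1 - x))^2)
        - (Gs a b x * (c - ln (1 - x)) - Fs a b x) * ((-1) * (c - ln (1 - x))^2 + (of_nat 2 * (1 / (1 - x) * (c - ln (1 - x)) ^ (2 - Suc 0))) * (1 - x)))
       / (((1 - x) * (c - ln (1 - x))^2) * ((1 - x) * (c - ln (1 - x))^2)) = fd2 c x"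
    unfolding fd2_def h_eq[OF a_pos b_pos ab_le] g_eq[OF a_pos b_pos ab_le]
    by (rule alg2[OF x1(1) assms(2)])
  ultimately show ?thesis by simp
qed

end


lemma convex_from_deriv2:
  fixes f df ddf :: "real \<Rightarrow> real"
  assumes d1: "\<And>x. x \<in> {0..<1} \<Longrightarrow> (f has_real_derivative df x) (at x)"
    and d2: "\<And>x. x \<in> {0..<1} \<Longrightarrow> (df has_real_derivative ddf x) (at x)"
    and nn: "\<And>x. x \<in> {0..<1} \<Longrightarrow> ddf x \<ge> 0"
  shows "convex_on {0..<1} f"
proof (rule convex_on_realI[where f' = df])
  show "connected {0..<1::real}" by simp
  show "\<And>x. x \<in> {0..<1} \<Longrightarrow> (f has_real_derivative df x) (at x)" by (rule d1)
  fix x y :: real assume xy: "x \<in> {0..<1}" "y \<in> {0..<1}" "x \<le> y"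
  show "df x \<le> df y"
  proof (rule DERIV_nonneg_imp_nondecreasing[OF xy(3)])
    fix t assume "x \<le> t" "t \<le> y"
    then have "t \<in> {0..<1}" using xy by auto
    then show "\<exists>z. (df has_real_derivative z) (at t) \<and> 0 \<le> z" using d2 nn by blast
  qed
qed

lemma convex_imp_deriv2_nonneg:
  fixes f df ddf :: "real \<Rightarrow> real"
  assumes cv: "convex_on {0..<1} f"
    and d1: "\<And>x. x \<in> {0<..<1} \<Longrightarrow> (f has_real_derivative df x) (at x)"
    and d2: "(df has_real_derivative ddf x0) (at x0)"
    and x0: "x0 \<in> {0<..<1}"
  shows "ddf x0 \<ge> 0"
proof (rule ccontr)
  assume "\<not> ddf x0 \<ge> 0"
  then have "ddf x0 < 0" by simp
  from DERIV_neg_dec_right[OF d2 this] obtain d where d: "d > 0" "\<And>h. h > 0 \<Longrightarrow> h < d \<Longrightarrow> df x0 > df (x0 + h)"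
    by blast
  define h where "h = min d (1 - x0) / 2"
  have h: "h > 0" "h < d" "x0 + h < 1" using d x0 by (auto simp: h_def min_def field_simps)
  define y where "y = x0 + h"
  have y: "y \<in> {0<..<1}" using h x0 by (auto simp: y_def)
  have int: "interior {0..<1::real} = {0<..<1}" by simp
  have t1: "f y - f x0 \<ge> df x0 * (y - x0)"
    by (rule convex_on_imp_above_tangent[OF cv]) (use x0 y d1 in \<open>auto intro: has_field_derivative_at_within\<close>)
  have t2: "f x0 - f y \<ge> df y * (x0 - y)"
    by (rule convex_on_imp_above_tangent[OF cv]) (use x0 y d1 in \<open>auto intro: has_field_derivative_at_within\<close>)
  have "df y * (y - x0) \<ge> df x0 * (y - x0)" using t1 t2 by (simp add: algebra_simps)
  then have "df y \<ge> df x0" using h by (simp add: y_def)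
  moreover have "df x0 > df y" using d(2)[OF h(1) h(2)] by (simp add: y_def)
  ultimately show False by simp
qed

lemma concave_from_deriv2:
  fixes f df ddf :: "real \<Rightarrow> real"
  assumes d1: "\<And>x. x \<in> {0..<1} \<Longrightarrow> (f has_real_derivative df x) (at x)"
    and d2: "\<And>x. x \<in> {0..<1} \<Longrightarrow> (df has_real_derivative ddf x) (at x)"
    and nn: "\<And>x. x \<in> {0..<1} \<Longrightarrow> ddf x \<le> 0"
  shows "concave_on {0..<1} f"
  unfolding concave_on_def
  by (rule convex_from_deriv2[where df = "\<lambda>x. - df x" and ddf = "\<lambda>x. - ddf x"])
     (use d1 d2 nn in \<open>auto intro: DERIV_minus\<close>)

lemma concave_imp_deriv2_nonpos:
  fixes f df ddf :: "real \<Rightarrow> real"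
  assumes cv: "concave_on {0..<1} f"
    and d1: "\<And>x. x \<in> {0<..<1} \<Longrightarrow> (f has_real_derivative df x) (at x)"
    and d2: "(df has_real_derivative ddf x0) (at x0)"
    and x0: "x0 \<in> {0<..<1}"
  shows "ddf x0 \<le> 0"
proof -
  have "- ddf x0 \<ge> 0"
    by (rule convex_imp_deriv2_nonneg[where f = "\<lambda>x. - f x" and df = "\<lambda>x. - df x" and ddf = "\<lambda>x. - ddf x"])
       (use cv d1 d2 x0 in \<open>auto simp: concave_on_def intro: DERIV_minus\<close>)
  then show ?thesis by simp
qed


lemma quad_facts:
  fixes h p m y :: real
  assumes h: "h > 0" and mp: "m \<le> p"
  shows "y \<ge> p \<Longrightarrow> h * (y - p) * (y - m) \<ge> 0"
    and "m \<le> y \<Longrightarrow> y \<le> p \<Longrightarrow> h * (y - p) * (y - m) \<le> 0"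
    and "m < y \<Longrightarrow> y < p \<Longrightarrow> h * (y - p) * (y - m) < 0"
    and "h * (y - p) * (y - m) \<ge> 0 \<Longrightarrow> y \<ge> p \<or> y \<le> m"
    and "h * (y - p) * (y - m) \<le> 0 \<Longrightarrow> m \<le> y \<and> y \<le> p"
  using assms by (auto simp: mult.assoc zero_le_mult_iff mult_le_0_iff mult_less_0_iff)

context
  fixes a b :: real
  assumes a_pos: "a > 0" and b_pos: "b > 0" and ab_le: "a + b \<le> 1"
begin

lemmas Q_factor' = Q_factor[OF a_pos b_pos ab_le]
lemmas h_pos' = h_pos[OF a_pos b_pos ab_le]
lemmas omega_order' = omega_order[OF a_pos b_pos ab_le]
lemmas omega_order_strict' = omega_order_strict[OF a_pos b_pos ab_le]

definition "QQ x y = h_fun a b x * y^2 + g_fun a b x * y + 2 * Fs a b x"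

lemma QQ_eq: "0 \<le> x \<Longrightarrow> x < 1 \<Longrightarrow>
   QQ x y = h_fun a b x * (y - omega_plus a b x) * (y - omega_minus a b x)"
  unfolding QQ_def by (rule Q_factor')

lemmas qf = quad_facts[OF h_pos' omega_order']

lemma QQ_nonneg_if: "0 \<le> x \<Longrightarrow> x < 1 \<Longrightarrow> y \<ge> omega_plus a b x \<Longrightarrow> QQ x y \<ge> 0"
  using qf(1) QQ_eq by auto
lemma QQ_nonpos_if: "0 \<le> x \<Longrightarrow> x < 1 \<Longrightarrow> omega_minus a b x \<le> y \<Longrightarrow> y \<le> omega_plus a b x \<Longrightarrow> QQ x y \<le> 0"
  using qf(2) QQ_eq by auto
lemma QQ_neg_if: "0 \<le> x \<Longrightarrow> x < 1 \<Longrightarrow> omega_minus a b x < y \<Longrightarrow> y < omega_plus a b x \<Longrightarrow> QQ x y < 0"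
  using qf(3) QQ_eq by auto
lemma QQ_nonneg_cases: "0 \<le> x \<Longrightarrow> x < 1 \<Longrightarrow> QQ x y \<ge> 0 \<Longrightarrow> y \<ge> omega_plus a b x \<or> y \<le> omega_minus a b x"
  using qf(4) QQ_eq by auto
lemma QQ_nonpos_cases: "0 \<le> x \<Longrightarrow> x < 1 \<Longrightarrow> QQ x y \<le> 0 \<Longrightarrow> omega_minus a b x \<le> y \<and> y \<le> omega_plus a b x"
  using qf(5) QQ_eq by auto


lemma fd2_eq: "fd2 a b c x = QQ x (c - ln (1 - x)) / ((1 - x)^2 * (c - ln (1 - x))^3)"
  unfolding fd2_def[OF a_pos b_pos ab_le] QQ_def ..

lemma fd2_sign:
  assumes "0 \<le> x" "x < 1" "c - ln (1 - x) > 0"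
  shows "fd2 a b c x \<ge> 0 \<longleftrightarrow> QQ x (c - ln (1 - x)) \<ge> 0"
    and "fd2 a b c x \<le> 0 \<longleftrightarrow> QQ x (c - ln (1 - x)) \<le> 0"
proof -
  have d: "(1 - x)^2 * (c - ln (1 - x))^3 > 0" using assms by simp
  show "fd2 a b c x \<ge> 0 \<longleftrightarrow> QQ x (c - ln (1 - x)) \<ge> 0"
    unfolding fd2_eq using d by (simp add: zero_le_divide_iff)
  show "fd2 a b c x \<le> 0 \<longleftrightarrow> QQ x (c - ln (1 - x)) \<le> 0"
    unfolding fd2_eq using d by (simp add: divide_le_0_iff)
qed

lemma cont0_le:
  fixes \<phi> :: "real \<Rightarrow> real"
  assumes "isCont \<phi> 0" "\<And>x. x \<in> {0<..<1} \<Longrightarrow> \<phi> x \<le> c"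
  shows "\<phi> 0 \<le> c"
proof -
  have "(\<phi> \<longlongrightarrow> \<phi> 0) (at_right 0)"
    using assms(1) unfolding isCont_def by (rule tendsto_mono[OF at_le, rotated]) simp
  moreover have "eventually (\<lambda>x. \<phi> x \<le> c) (at_right 0)"
    using eventually_at_right_real[OF zero_less_one] by eventually_elim (use assms(2) in auto)
  ultimately show ?thesis by (rule tendsto_upperbound) simp
qed

lemma cont0_ge:
  fixes \<phi> :: "real \<Rightarrow> real"
  assumes "isCont \<phi> 0" "\<And>x. x \<in> {0<..<1} \<Longrightarrow> \<phi> x \<ge> c"
  shows "\<phi> 0 \<ge> c"
proof -
  have "(\<phi> \<longlongrightarrow> \<phi> 0) (at_right 0)"
    using assms(1) unfolding isCont_def by (rule tendsto_mono[OF at_le, rotated]) simp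
  moreover have "eventually (\<lambda>x. \<phi> x \<ge> c) (at_right 0)"
    using eventually_at_right_real[OF zero_less_one] by eventually_elim (use assms(2) in auto)
  ultimately show ?thesis by (rule tendsto_lowerbound) simp
qed

lemmas phi_plus_cont' = phi_plus_cont[OF a_pos b_pos ab_le]
lemmas phi_minus_cont' = phi_minus_cont[OF a_pos b_pos ab_le]
lemmas phi_minus_upper' = phi_minus_upper[OF a_pos b_pos ab_le]

lemma phi_omega_plus: "c \<ge> phi_plus a b x \<longleftrightarrow> c - ln (1 - x) \<ge> omega_plus a b x"
  unfolding phi_plus_def by auto
lemma phi_omega_minus: "c \<ge> phi_minus a b x \<longleftrightarrow> c - ln (1 - x) \<ge> omega_minus a b x"
  unfolding phi_minus_def by auto

lemma IVT_argument:
  assumes Q: "\<And>x. x \<in> {0<..<1} \<Longrightarrow> QQ x (c - ln (1 - x)) \<ge> 0"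
  shows "\<And>x. x \<in> {0<..<1} \<Longrightarrow> phi_plus a b x \<le> c"
proof (rule ccontr)
  fix x1 assume x1: "x1 \<in> {0<..<1}" and nle: "\<not> phi_plus a b x1 \<le> c"
  have x1': "0 \<le> x1" "x1 < 1" using x1 by auto
  have "\<not> c - ln (1 - x1) \<ge> omega_plus a b x1" using nle phi_omega_plus by auto
  then have "c - ln (1 - x1) \<le> omega_minus a b x1" using QQ_nonneg_cases[OF x1' Q[OF x1]] by auto
  then have m1: "phi_minus a b x1 \<ge> c" unfolding phi_minus_def by simp
  define x2 where "x2 = 1 - exp (- (\<bar>c\<bar> + 5))"
  have x2: "0 < x2" "x2 < 1" unfolding x2_def by auto
  have lx2: "ln (1 - x2) = - (\<bar>c\<bar> + 5)" unfolding x2_def by simp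
  have m2: "phi_minus a b x2 < c" using phi_minus_upper'[of x2] x2 lx2 by simp
  have "x1 < x2"
  proof (rule ccontr)
    assume "\<not> x1 < x2"
    then have "1 - x1 \<le> 1 - x2" by simp
    then have "ln (1 - x1) \<le> ln (1 - x2)" using x1' x2 by simp
    then have "phi_minus a b x1 < c" using phi_minus_upper'[OF x1'] lx2 by simp
    then show False using m1 by simp
  qed
  have x2': "0 \<le> x2" "x2 < 1" using x2 by auto
  have "\<not> c - ln (1 - x2) \<le> omega_minus a b x2" using m2 unfolding phi_minus_def by simp
  then have "c - ln (1 - x2) \<ge> omega_plus a b x2" using QQ_nonneg_cases[OF x2' Q] x2 by auto
  then have p2: "phi_plus a b x2 \<le> c" unfolding phi_plus_def by simp
  define \<rho> where "\<rho> x = (c - phi_minus a b x) / (phi_plus a b x - phi_minus a b x)" for x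
  have gap: "phi_plus a b x - phi_minus a b x > 0" if "x \<in> {x1..x2}" for x
  proof -
    have "0 < x" "x < 1" using that x1 x2 by auto
    then show ?thesis using omega_order_strict'[of x] unfolding phi_plus_def phi_minus_def by simp
  qed
  have cont: "continuous_on {x1..x2} \<rho>"
  proof (intro continuous_at_imp_continuous_on ballI)
    fix x assume x: "x \<in> {x1..x2}"
    then have "0 \<le> x" "x < 1" using x1 x2 by auto
    then show "isCont \<rho> x" unfolding \<rho>_def[abs_def] using gap[OF x]
      by (intro continuous_intros phi_plus_cont' phi_minus_cont') auto
  qed
  have r1: "\<rho> x1 \<le> 1/2"
  proof -
    have "c - phi_minus a b x1 \<le> 0" using m1 by simp
    then have "\<rho> x1 \<le> 0" unfolding \<rho>_def using gap[of x1] \<open>x1 < x2\<close>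
      by (intro divide_nonpos_pos) auto
    then show ?thesis by simp
  qed
  have r2: "\<rho> x2 \<ge> 1/2"
  proof -
    have g: "phi_plus a b x2 - phi_minus a b x2 > 0" using gap[of x2] \<open>x1 < x2\<close> by auto
    have "c - phi_minus a b x2 \<ge> phi_plus a b x2 - phi_minus a b x2" using p2 by simp
    then have "\<rho> x2 \<ge> 1" unfolding \<rho>_def using g by simp
    then show ?thesis by simp
  qed
  obtain z where z: "x1 \<le> z" "z \<le> x2" "\<rho> z = 1/2"
    using IVT'[of \<rho> x1 "1/2" x2, OF r1 r2 _ cont] \<open>x1 < x2\<close> by auto
  have xin: "z \<in> {x1..x2}" using z by auto
  have gx: "phi_plus a b z - phi_minus a b z > 0" using gap[OF xin] .
  have "c - phi_minus a b z = (phi_plus a b z - phi_minus a b z) / 2"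
    using z(3) gx unfolding \<rho>_def by (simp add: field_simps)
  then have e2: "2 * (c - phi_minus a b z) = phi_plus a b z - phi_minus a b z" by simp
  have m: "phi_minus a b z < c" using gx e2 by (smt (verit))
  have p: "c < phi_plus a b z" using gx e2 by (smt (verit))
  have "omega_minus a b z < c - ln (1 - z)" using m unfolding phi_minus_def by linarith
  moreover have "c - ln (1 - z) < omega_plus a b z" using p unfolding phi_plus_def by linarith
  moreover have "0 \<le> z" "z < 1" "z \<in> {0<..<1}" using z x1 x2 by auto
  ultimately have "QQ z (c - ln (1 - z)) < 0" using QQ_neg_if by blast
  then show False using Q[of z] \<open>z \<in> {0<..<1}\<close> by simp
qed


lemmas Fs_ge1' = Fs_ge1[OF a_pos b_pos ab_le]

lemma ypt_facts:
  fixes c e :: real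
  assumes "c \<le> 0" "e > 0"
  shows "0 < 1 - exp (c - e)" "1 - exp (c - e) < 1" "1 - exp c < 1 - exp (c - e)"
    "c - ln (1 - (1 - exp (c - e))) = e"
    "f_abc a b c (1 - exp (c - e)) \<ge> 1 / e"
proof -
  have "exp (c - e) < exp c" using assms by simp
  moreover have "exp c \<le> 1" using assms by simp
  ultimately show "0 < 1 - exp (c - e)" "1 - exp c < 1 - exp (c - e)" by auto
  show "1 - exp (c - e) < 1" by simp
  show L: "c - ln (1 - (1 - exp (c - e))) = e" by simp
  have "Fs a b (1 - exp (c - e)) \<ge> 1"
    using Fs_ge1' \<open>0 < 1 - exp (c - e)\<close> by simp
  then show "f_abc a b c (1 - exp (c - e)) \<ge> 1 / e"
    unfolding f_abc_def Fs_def[symmetric] L using assms by (simp add: divide_right_mono)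
qed

lemma ypt_mono:
  fixes c e1 e2 :: real
  assumes "e1 < e2"
  shows "1 - exp (c - e1) < 1 - exp (c - e2)"
  using assms by simp

lemma f_x0:
  shows "f_abc a b c (1 - exp c) = 0"
  unfolding f_abc_def by simp

lemma x0_facts:
  fixes c :: real
  assumes "c \<le> 0"
  shows "0 \<le> 1 - exp c" "1 - exp c < 1"
  using assms by auto

lemma not_convex_nonpos:
  assumes c: "c \<le> 0"
  shows "\<not> convex_on {0..<1} (f_abc a b c)"
proof
  assume cv: "convex_on {0..<1} (f_abc a b c)"
  define f where "f = f_abc a b c"
  define x0 where "x0 = 1 - exp c"
  define z1 where "z1 = 1 - exp (c - 1)"
  define M where "M = f z1"
  have M1: "M \<ge> 1" unfolding M_def f_def z1_def using ypt_facts(5)[OF c, of 1] by simp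
  define e where "e = 1 / (M + 1)"
  have e: "e > 0" "e < 1" using M1 by (auto simp: e_def field_simps)
  define y where "y = 1 - exp (c - e)"
  have xy: "x0 < y" unfolding x0_def y_def using ypt_facts(3)[OF c e(1)] .
  have yz: "y < z1" unfolding y_def z1_def using ypt_mono[OF e(2)] .
  have z1: "z1 < 1" unfolding z1_def by simp
  have x0: "0 \<le> x0" unfolding x0_def using x0_facts[OF c] by simp
  have sub: "{x0..z1} \<subseteq> {0..<1}" using x0 z1 by auto
  have "f y \<le> max (f x0) (f z1)"
    by (rule convex_on_le_max[OF convex_on_subset[OF cv[folded f_def] sub]]) (use xy yz in auto)
  also have "\<dots> = M" unfolding M_def f_def x0_def f_x0 using M1 M_def f_def by simp
  finally have "f y \<le> M" .
  moreover have "f y \<ge> 1 / e" unfolding f_def y_def using ypt_facts(5)[OF c e(1)] .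
  moreover have "1 / e = M + 1" unfolding e_def by simp
  ultimately show False by simp
qed

lemma not_concave_nonpos:
  assumes c: "c \<le> 0"
  shows "\<not> concave_on {0..<1} (f_abc a b c)"
proof
  assume cv: "concave_on {0..<1} (f_abc a b c)"
  define f where "f = f_abc a b c"
  define x0 where "x0 = 1 - exp c"
  define z1 where "z1 = 1 - exp (c - 1)"
  define z2 where "z2 = 1 - exp (c - 2)"
  have z12: "z1 < z2" unfolding z1_def z2_def by (rule ypt_mono) simp
  have z2: "z2 < 1" unfolding z2_def by simp
  define M where "M = \<bar>f z1 - f z2\<bar> / (z2 - z1) + \<bar>f z2\<bar>"
  have M0: "M \<ge> 0" unfolding M_def using z12 by simp
  define e where "e = 1 / (M + 2)"
  have e: "e > 0" "e < 1" using M0 by (auto simp: e_def field_simps)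
  define y where "y = 1 - exp (c - e)"
  have y0: "0 < y" unfolding y_def using ypt_facts(1)[OF c e(1)] .
  have yz: "y < z1" unfolding y_def z1_def using ypt_mono[OF e(2)] .
  have sub: "{y..z2} \<subseteq> {0..<1}" using y0 z2 by auto
  have cs: "concave_on {y..z2} f" using convex_on_subset[OF cv[unfolded concave_on_def] sub]
    unfolding concave_on_def f_def by simp
  have key: "f z1 \<ge> (f y - f z2) / (z2 - y) * (z2 - z1) + f z2"
    by (rule concave_onD_Icc''[OF cs]) (use yz z12 in auto)
  have "f y \<le> M"
  proof (cases "f y - f z2 \<le> 0")
    case True
    have "\<bar>f z1 - f z2\<bar> / (z2 - z1) \<ge> 0" using z12 by simp
    then show ?thesis unfolding M_def using True abs_ge_self[of "f z2"] by linarith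
  next
    case False
    define A where "A = f y - f z2"
    define B where "B = f z1 - f z2"
    have A: "A > 0" using False by (simp add: A_def)
    have d: "z2 - y > 0" "z2 - z1 > 0" "z2 - y \<le> 1" using yz z12 y0 z2 by auto
    have "A / (z2 - y) * (z2 - z1) \<le> B" using key unfolding A_def B_def by simp
    then have "(A * (z2 - z1)) / (z2 - y) \<le> B" by (simp add: times_divide_eq_left)
    then have "A * (z2 - z1) \<le> B * (z2 - y)" using d(1) by (simp only: pos_divide_le_eq)
    also have "\<dots> \<le> \<bar>B\<bar> * (z2 - y)" using d(1) by (intro mult_right_mono) auto
    also have "\<dots> \<le> \<bar>B\<bar> * 1" using d(3) by (intro mult_left_mono) auto
    finally have "A * (z2 - z1) \<le> \<bar>B\<bar>" by simp
    then have "A \<le> \<bar>B\<bar> / (z2 - z1)" using d(2) by (simp only: pos_le_divide_eq)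
    then show ?thesis unfolding M_def A_def B_def using abs_ge_self[of "f z2"] by linarith
  qed
  moreover have "f y \<ge> 1 / e" unfolding f_def y_def using ypt_facts(5)[OF c e(1)] .
  moreover have "1 / e = M + 2" unfolding e_def by simp
  ultimately show False by simp
qed

end


context
  fixes a b :: real
  assumes a_pos: "a > 0" and b_pos: "b > 0" and ab_le: "a + b \<le> 1"
begin

lemmas AB = a_pos b_pos ab_le

lemma main_result:
  "(convex_on {0..<1} (f_abc a b c) \<longleftrightarrow> c \<ge> (SUP x\<in>{0..<1}. phi_plus a b x))
   \<and> (concave_on {0..<1} (f_abc a b c) \<longleftrightarrow>
        c \<in> {(SUP x\<in>{0..<1}. phi_minus a b x)..(INF x\<in>{0..<1}. phi_plus a b x)})"
proof -
  define A where "A = {0..<1::real}"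
  have A0: "A \<noteq> {}" "0 \<in> A" unfolding A_def by auto
  have Acases: "x = 0 \<or> x \<in> {0<..<1}" if "x \<in> A" for x using that unfolding A_def by auto
  have bddP: "bdd_above (phi_plus a b ` A)"
    unfolding A_def by (rule bdd_aboveI2[where M = "(a + b) / (a * b) + 2"]) (use phi_plus_upper[OF AB] in auto)
  have bddPb: "bdd_below (phi_plus a b ` A)"
    unfolding A_def by (rule bdd_belowI2) (use phi_plus_lower[OF AB] in auto)
  have bddM: "bdd_above (phi_minus a b ` A)"
    unfolding A_def by (rule bdd_aboveI2[where M = 4]) (use phi_minus_le4[OF AB] in auto)
  define \<alpha>0 where "\<alpha>0 = (SUP x\<in>A. phi_plus a b x)"
  define \<delta>m where "\<delta>m = (SUP x\<in>A. phi_minus a b x)"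
  define \<delta>p where "\<delta>p = (INF x\<in>A. phi_plus a b x)"
  have \<alpha>0_ge: "phi_plus a b x \<le> \<alpha>0" if "x \<in> A" for x
    unfolding \<alpha>0_def using that bddP by (rule cSUP_upper)
  have \<delta>m_ge: "phi_minus a b x \<le> \<delta>m" if "x \<in> A" for x
    unfolding \<delta>m_def using that bddM by (rule cSUP_upper)
  have \<delta>p_le: "\<delta>p \<le> phi_plus a b x" if "x \<in> A" for x
    unfolding \<delta>p_def using bddPb that by (rule cINF_lower)
  have cP: "isCont (phi_plus a b) 0" using phi_plus_cont'[OF AB, of 0] by simp
  have cM: "isCont (phi_minus a b) 0" using phi_minus_cont'[OF AB, of 0] by simp
  have \<alpha>0_pos: "\<alpha>0 > 0" using \<alpha>0_ge[OF A0(2)] phi_plus_0_pos[OF AB] by simp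
  have \<delta>m_pos: "\<delta>m > 0" using \<delta>m_ge[OF A0(2)] phi_minus_0_pos[OF AB] by simp
  have goal: "(convex_on A (f_abc a b c) \<longleftrightarrow> c \<ge> \<alpha>0) \<and> (concave_on A (f_abc a b c) \<longleftrightarrow> c \<in> {\<delta>m..\<delta>p})"
  proof (cases "c \<le> 0")
    case True
    show ?thesis unfolding A_def
      using not_convex_nonpos[OF AB True] not_concave_nonpos[OF AB True] True \<alpha>0_pos \<delta>m_pos by auto
  next
    case False
    then have c0: "c > 0" by simp
    have Lpos: "c - ln (1 - x) > 0" if "x \<in> A" for x
    proof -
      have "0 \<le> x" "x < 1" using that unfolding A_def by auto
      then have "- ln (1 - x) \<ge> 0" by (rule ell_bounds(1)[OF AB])
      then show ?thesis using c0 by simp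
    qed
    have dF: "(f_abc a b c has_real_derivative fd1 a b c x) (at x)" if "x \<in> A" for x
      using that Lpos[OF that] unfolding A_def by (intro f_deriv[OF AB]) auto
    have dF1: "(fd1 a b c has_real_derivative fd2 a b c x) (at x)" if "x \<in> A" for x
      using that Lpos[OF that] unfolding A_def by (intro f1_deriv[OF AB]) auto
    have inA: "x \<in> A" if "x \<in> {0<..<1}" for x using that unfolding A_def by auto
    have A01: "0 \<le> x" "x < 1" if "x \<in> A" for x using that unfolding A_def by auto
    have convex_iff: "convex_on A (f_abc a b c) \<longleftrightarrow> c \<ge> \<alpha>0"
    proof
      assume cv: "convex_on A (f_abc a b c)"
      have Q: "QQ a b x (c - ln (1 - x)) \<ge> 0" if "x \<in> {0<..<1}" for x
      proof -
        have "fd2 a b c x \<ge> 0"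
        proof (rule convex_imp_deriv2_nonneg[where df = "fd1 a b c" and ddf = "fd2 a b c", OF cv[unfolded A_def]])
          show "\<And>y. y \<in> {0<..<1} \<Longrightarrow> (f_abc a b c has_real_derivative fd1 a b c y) (at y)"
            by (rule dF[OF inA])
          show "(fd1 a b c has_real_derivative fd2 a b c x) (at x)" by (rule dF1[OF inA[OF that]])
          show "x \<in> {0<..<1}" by (rule that)
        qed
        then show ?thesis using fd2_sign(1)[OF AB A01[OF inA[OF that]] Lpos[OF inA[OF that]]] by simp
      qed
      have P: "phi_plus a b x \<le> c" if "x \<in> {0<..<1}" for x
        using IVT_argument[OF AB Q that] .
      have "phi_plus a b 0 \<le> c"
        by (rule cont0_le[OF AB cP P])
      then have "\<forall>x\<in>A. phi_plus a b x \<le> c" using P Acases by blast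
      then show "c \<ge> \<alpha>0" unfolding \<alpha>0_def using A0(1) by (intro cSUP_least) auto
    next
      assume c: "c \<ge> \<alpha>0"
      show "convex_on A (f_abc a b c)" unfolding A_def
      proof (rule convex_from_deriv2[where df = "fd1 a b c" and ddf = "fd2 a b c"])
        fix x :: real assume x: "x \<in> {0..<1}"
        then have xA: "x \<in> A" unfolding A_def .
        show "(f_abc a b c has_real_derivative fd1 a b c x) (at x)" using dF[OF xA] .
        show "(fd1 a b c has_real_derivative fd2 a b c x) (at x)" using dF1[OF xA] .
        have "phi_plus a b x \<le> c" using \<alpha>0_ge[OF xA] c by simp
        then have "c - ln (1 - x) \<ge> omega_plus a b x" using phi_omega_plus[OF AB] by blast
        then have "QQ a b x (c - ln (1 - x)) \<ge> 0" using QQ_nonneg_if[OF AB A01[OF xA]] by blast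
        then show "fd2 a b c x \<ge> 0" using fd2_sign(1)[OF AB A01[OF xA] Lpos[OF xA]] by simp
      qed
    qed
    have concave_iff: "concave_on A (f_abc a b c) \<longleftrightarrow> c \<in> {\<delta>m..\<delta>p}"
    proof
      assume cv: "concave_on A (f_abc a b c)"
      have Q: "omega_minus a b x \<le> c - ln (1 - x) \<and> c - ln (1 - x) \<le> omega_plus a b x"
        if "x \<in> {0<..<1}" for x
      proof -
        have "fd2 a b c x \<le> 0"
        proof (rule concave_imp_deriv2_nonpos[where df = "fd1 a b c" and ddf = "fd2 a b c", OF cv[unfolded A_def]])
          show "\<And>y. y \<in> {0<..<1} \<Longrightarrow> (f_abc a b c has_real_derivative fd1 a b c y) (at y)"
            by (rule dF[OF inA])
          show "(fd1 a b c has_real_derivative fd2 a b c x) (at x)" by (rule dF1[OF inA[OF that]])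
          show "x \<in> {0<..<1}" by (rule that)
        qed
        then have "QQ a b x (c - ln (1 - x)) \<le> 0"
          using fd2_sign(2)[OF AB A01[OF inA[OF that]] Lpos[OF inA[OF that]]] by simp
        then show ?thesis using QQ_nonpos_cases[OF AB A01[OF inA[OF that]]] by blast
      qed
      have P1: "phi_plus a b x \<ge> c" if "x \<in> {0<..<1}" for x
        using Q[OF that] unfolding phi_plus_def by simp
      have M1: "phi_minus a b x \<le> c" if "x \<in> {0<..<1}" for x
        using Q[OF that] unfolding phi_minus_def by simp
      have "phi_plus a b 0 \<ge> c"
        by (rule cont0_ge[OF AB cP P1])
      then have allP: "\<forall>x\<in>A. phi_plus a b x \<ge> c" using P1 Acases by blast
      have "phi_minus a b 0 \<le> c"
        by (rule cont0_le[OF AB cM M1])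
      then have allM: "\<forall>x\<in>A. phi_minus a b x \<le> c" using M1 Acases by blast
      have "\<delta>m \<le> c" unfolding \<delta>m_def using A0(1) allM by (intro cSUP_least) auto
      moreover have "c \<le> \<delta>p" unfolding \<delta>p_def using A0(1) allP by (intro cINF_greatest) auto
      ultimately show "c \<in> {\<delta>m..\<delta>p}" by simp
    next
      assume c: "c \<in> {\<delta>m..\<delta>p}"
      show "concave_on A (f_abc a b c)" unfolding A_def
      proof (rule concave_from_deriv2[where df = "fd1 a b c" and ddf = "fd2 a b c"])
        fix x :: real assume x: "x \<in> {0..<1}"
        then have xA: "x \<in> A" unfolding A_def .
        show "(f_abc a b c has_real_derivative fd1 a b c x) (at x)" using dF[OF xA] .
        show "(fd1 a b c has_real_derivative fd2 a b c x) (at x)" using dF1[OF xA] .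
        have "phi_plus a b x \<ge> c" using \<delta>p_le[OF xA] c by simp
        then have "c - ln (1 - x) \<le> omega_plus a b x" unfolding phi_plus_def by simp
        moreover have "phi_minus a b x \<le> c" using \<delta>m_ge[OF xA] c by simp
        then have "c - ln (1 - x) \<ge> omega_minus a b x" unfolding phi_minus_def by simp
        ultimately have "QQ a b x (c - ln (1 - x)) \<le> 0" using QQ_nonpos_if[OF AB A01[OF xA]] by blast
        then show "fd2 a b c x \<le> 0" using fd2_sign(2)[OF AB A01[OF xA] Lpos[OF xA]] by simp
      qed
    qed
    show ?thesis using convex_iff concave_iff by blast
  qed
  then show ?thesis unfolding A_def \<alpha>0_def \<delta>m_def \<delta>p_def .
qed

end

theorem theorem2:
  fixes a b c :: real
  assumes "a > 0" and "b > 0" and "a + b \<le> 1"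
  defines "\<alpha>0 \<equiv> (SUP x\<in>{0..<1}. phi_plus a b x)"
      and "\<delta>m \<equiv> (SUP x\<in>{0..<1}. phi_minus a b x)"
      and "\<delta>p \<equiv> (INF x\<in>{0..<1}. phi_plus a b x)"
  shows "(convex_on {0..<1} (f_abc a b c) \<longleftrightarrow> c \<ge> \<alpha>0)
       \<and> (concave_on {0..<1} (f_abc a b c) \<longleftrightarrow> c \<in> {\<delta>m..\<delta>p})"
  unfolding \<alpha>0_def \<delta>m_def \<delta>p_def using main_result[OF assms(1-3)] .

end
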